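(* Let $q \geq 3$ be an integer, let $p$ be a prime with $p \geq q$, and let $r$ be a power of $p$. Let $\omega_0, \omega_1, \ldots, \omega_{q-1}$ be nonnegative integers with $\omega_0 + \omega_1 + \cdots + \omega_{q-1} = r$. Then for every integer $d_0$ with $1 \leq d_0 \leq r-2$, there exists a $q$-ary constant-composition code $C \subseteq V_{r,[\omega_0,\ldots,\omega_{q-1}]}(q)$ with minimum Hamming distance at least $\mu_p(d_0)+2$ and with $$|C| \;\geq\; \binom{r}{\omega_0,\omega_1,\ldots,\omega_{q-1}} \Big/ r^{d_0-1},$$ where $\binom{r}{\omega_0,\ldots,\omega_{q-1}} = \frac{r!}{\omega_0!\,\omega_1!\cdots\omega_{q-1}!}$ is the multinomial coefficient.
   Context: Let $\mathbb{Z}_q = \{0,1,\ldots,q-1\}$ and let $\mathbb{Z}_q^n$ be the set of $n$-tuples over $\mathbb{Z}_q$. For nonnegative integers $\omega_0,\ldots,\omega_{q-1}$ with sum $n$, $V_{n,[\omega_0,\ldots,\omega_{q-1}]}(q)$ denotes the set of $n$-tuples over $\mathbb{Z}_q$ in which, for each $j \in \{0,\ldots,q-1\}$, the symbol $j$ occurs exactly $\omega_j$ times. A $q$-ary constant-composition code with composition $[\omega_0,\ldots,\omega_{q-1}]$ is a subset of $V_{n,[\omega_0,\ldots,\omega_{q-1}]}(q)$; its minimum distance is the minimum Hamming distance between distinct codewords. For a prime $p$ and positive integer $e$, define $\mu_p(e) = e$ if $p \mid e$, and $\mu_p(e) = e-1$ otherwise. *)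

theory Defs
  imports Complex_Main "HOL-Library.FuncSet" "HOL-Computational_Algebra.Primes"
begin

text \<open>Words of length n over Z_q are represented as functions nat => nat that map
  {..<n} into {..<q} and are 0 (undefined) outside {..<n} (extensional functions).\<close>

definition const_comp_words :: "nat \<Rightarrow> nat \<Rightarrow> (nat \<Rightarrow> nat) \<Rightarrow> (nat \<Rightarrow> nat) set" where
  "const_comp_words q n \<omega> =
     {x \<in> {..<n} \<rightarrow>\<^sub>E {..<q}. \<forall>j<q. card {i \<in> {..<n}. x i = j} = \<omega> j}"

definition hamming_dist :: "nat \<Rightarrow> (nat \<Rightarrow> nat) \<Rightarrow> (nat \<Rightarrow> nat) \<Rightarrow> nat" where
  "hamming_dist n x y = card {i \<in> {..<n}. x i \<noteq> y i}"

definition min_dist_at_least :: "nat \<Rightarrow> (nat \<Rightarrow> nat) set \<Rightarrow> nat \<Rightarrow> bool" where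
  "min_dist_at_least n C D \<longleftrightarrow> (\<forall>x\<in>C. \<forall>y\<in>C. x \<noteq> y \<longrightarrow> D \<le> hamming_dist n x y)"

definition mu :: "nat \<Rightarrow> nat \<Rightarrow> nat" where
  "mu p e = (if p dvd e then e else e - 1)"

definition multinomial :: "nat \<Rightarrow> nat \<Rightarrow> (nat \<Rightarrow> nat) \<Rightarrow> real" where
  "multinomial q r \<omega> = fact r / (\<Prod>j<q. fact (\<omega> j))"

end

theory Submission
  imports Defs "HOL-Algebra.Algebraic_Closure" "HOL-Number_Theory.Residues"
begin

hide_const (open) Divisibility.prime


definition ccw :: "nat set \<Rightarrow> nat \<Rightarrow> (nat \<Rightarrow> nat) \<Rightarrow> (nat \<Rightarrow> nat) set" where
  "ccw I q \<omega> = {x \<in> I \<rightarrow>\<^sub>E {..<q}. \<forall>j<q. card {i \<in> I. x i = j} = \<omega> j}"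

lemma const_comp_words_ccw: "const_comp_words q n \<omega> = ccw {..<n} q \<omega>"
  by (simp add: const_comp_words_def ccw_def)

lemma card_fibers:
  assumes "finite W" "f ` W \<subseteq> Y" "finite Y"
  shows "card W = (\<Sum>y\<in>Y. card {x\<in>W. f x = y})"
  using sum.group[OF assms(1) assms(3) assms(2), of "\<lambda>_. 1::nat"] by simp

lemma pigeonhole_fiber:
  assumes "finite W" "f ` W \<subseteq> Y" "finite Y" "Y \<noteq> {}"
  shows "\<exists>y\<in>Y. card W \<le> card Y * card {x\<in>W. f x = y}"
proof (rule ccontr)
  assume "\<not> ?thesis"
  then have lt: "\<And>y. y \<in> Y \<Longrightarrow> card Y * card {x\<in>W. f x = y} < card W" by force
  have "card Y * card W = (\<Sum>y\<in>Y. card Y * card {x\<in>W. f x = y})"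
    using card_fibers[OF assms(1-3)] by (simp add: sum_distrib_left)
  also have "\<dots> < (\<Sum>y\<in>Y. card W)"
    using lt assms(3,4) by (intro sum_strict_mono) auto
  finally show False by simp
qed

lemma ccw_sum:
  assumes "finite I" "x \<in> ccw I q \<omega>"
  shows "(\<Sum>i\<in>I. x i) = (\<Sum>j<q. j * \<omega> j)"
proof -
  have img: "x ` I \<subseteq> {..<q}" using assms by (auto simp: ccw_def PiE_def Pi_def)
  have "(\<Sum>i\<in>I. x i) = (\<Sum>j<q. \<Sum>i\<in>{i\<in>I. x i = j}. x i)"
    using sum.group[OF assms(1) _ img, of x] by simp
  also have "\<dots> = (\<Sum>j<q. j * \<omega> j)"
  proof (rule sum.cong)
    fix j assume j: "j \<in> {..<q}"
    have "(\<Sum>i\<in>{i\<in>I. x i = j}. x i) = (\<Sum>i\<in>{i\<in>I. x i = j}. j)" by simp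
    also have "\<dots> = j * card {i\<in>I. x i = j}" by simp
    also have "card {i\<in>I. x i = j} = \<omega> j" using assms j by (auto simp: ccw_def)
    finally show "(\<Sum>i\<in>{i\<in>I. x i = j}. x i) = j * \<omega> j" .
  qed simp
  finally show ?thesis .
qed

lemma finite_ccw: "finite I \<Longrightarrow> finite (ccw I q \<omega>)"
  unfolding ccw_def by (rule finite_subset[OF _ finite_PiE[of I "\<lambda>_. {..<q}"]]) auto

lemma card_ccw:
  assumes "finite I" "(\<Sum>j<q. \<omega> j) = card I"
  shows "real (card (ccw I q \<omega>)) = fact (card I) / (\<Prod>j<q. fact (\<omega> j))"
  using assms
proof (induction q arbitrary: I)
  case 0
  then have "I = {}" by simp
  then show ?case by (simp add: ccw_def)
next
  case (Suc q)
  define k where "k = \<omega> q"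
  define n where "n = card I"
  have kn: "k \<le> n" using Suc.prems by (simp add: k_def n_def)
  define SS where "SS = {A. A \<subseteq> I \<and> card A = k}"
  define mg where "mg = (\<lambda>(A::nat set, y::nat\<Rightarrow>nat). (\<lambda>i. if i \<in> A then q else y i))"
  have fin: "finite SS" using Suc.prems by (simp add: SS_def)
  have eq: "ccw I (Suc q) \<omega> = mg ` (SIGMA A:SS. ccw (I - A) q \<omega>)"
  proof
    show "mg ` (SIGMA A:SS. ccw (I - A) q \<omega>) \<subseteq> ccw I (Suc q) \<omega>"
    proof clarify
      fix A y assume A: "A \<in> SS" and y: "y \<in> ccw (I - A) q \<omega>"
      have AI: "A \<subseteq> I" using A by (simp add: SS_def)
      have ext: "mg (A, y) \<in> I \<rightarrow>\<^sub>E {..<Suc q}"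
        using y AI by (auto simp: mg_def ccw_def PiE_def Pi_def extensional_def)
      have cj: "card {i \<in> I. mg (A, y) i = j} = \<omega> j" if "j < Suc q" for j
      proof (cases "j = q")
        case True
        have "{i \<in> I. mg (A, y) i = j} = A"
          using y AI True by (auto simp: mg_def ccw_def PiE_def Pi_def)
        then show ?thesis using A True by (simp add: SS_def k_def)
      next
        case False
        then have jq: "j < q" using that by simp
        have "{i \<in> I. mg (A, y) i = j} = {i \<in> I - A. y i = j}"
          using False by (auto simp: mg_def)
        then show ?thesis using y jq by (simp add: ccw_def)
      qed
      show "mg (A, y) \<in> ccw I (Suc q) \<omega>" using ext cj by (simp add: ccw_def)
    qed
  next
    show "ccw I (Suc q) \<omega> \<subseteq> mg ` (SIGMA A:SS. ccw (I - A) q \<omega>)"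
    proof
      fix x assume x: "x \<in> ccw I (Suc q) \<omega>"
      define A where "A = {i \<in> I. x i = q}"
      define y where "y = restrict x (I - A)"
      have "A \<in> SS" using x by (auto simp: SS_def A_def ccw_def k_def)
      moreover have "y \<in> ccw (I - A) q \<omega>"
      proof -
        have "y \<in> (I - A) \<rightarrow>\<^sub>E {..<q}"
          using x by (auto simp: y_def A_def ccw_def PiE_def Pi_def less_Suc_eq)
        moreover have "card {i \<in> I - A. y i = j} = \<omega> j" if "j < q" for j
        proof -
          have "{i \<in> I - A. y i = j} = {i \<in> I. x i = j}" using that by (auto simp: y_def A_def)
          then show ?thesis using x that by (simp add: ccw_def)
        qed
        ultimately show ?thesis by (simp add: ccw_def)
      qed
      moreover have "x = mg (A, y)"
        using x by (auto simp: mg_def y_def A_def ccw_def PiE_def extensional_def)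
      ultimately show "x \<in> mg ` (SIGMA A:SS. ccw (I - A) q \<omega>)" by blast
    qed
  qed
  have inj: "inj_on mg (SIGMA A:SS. ccw (I - A) q \<omega>)"
  proof (rule inj_onI, clarify)
    fix A y A' y'
    assume A: "A \<in> SS" and y: "y \<in> ccw (I - A) q \<omega>" and A': "A' \<in> SS" and y': "y' \<in> ccw (I - A') q \<omega>"
      and e: "mg (A, y) = mg (A', y')"
    have AI: "A \<subseteq> I" "A' \<subseteq> I" using A A' by (auto simp: SS_def)
    have yq: "\<And>i. i \<in> I - A \<Longrightarrow> y i < q" "\<And>i. i \<in> I - A' \<Longrightarrow> y' i < q"
      using y y' by (auto simp: ccw_def PiE_def Pi_def)
    have "A = {i \<in> I. mg (A, y) i = q}" using AI yq by (force simp: mg_def)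
    moreover have "A' = {i \<in> I. mg (A', y') i = q}" using AI yq by (force simp: mg_def)
    ultimately have AA: "A = A'" using e by simp
    have "y = y'"
    proof
      fix i
      show "y i = y' i"
      proof (cases "i \<in> I - A")
        case True
        then show ?thesis using fun_cong[OF e, of i] AA by (simp add: mg_def)
      next
        case False
        then show ?thesis using y y' AA by (auto simp: ccw_def PiE_def extensional_def)
      qed
    qed
    then show "A = A' \<and> y = y'" using AA by simp
  qed
  have cA: "real (card (ccw (I - A) q \<omega>)) = fact (n - k) / (\<Prod>j<q. fact (\<omega> j))" if "A \<in> SS" for A
  proof -
    have AI: "A \<subseteq> I" "card A = k" using that by (auto simp: SS_def)
    have "card (I - A) = n - k" using AI Suc.prems by (simp add: card_Diff_subset n_def finite_subset)
    moreover have "(\<Sum>j<q. \<omega> j) = n - k" using Suc.prems by (simp add: k_def n_def)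
    ultimately show ?thesis using Suc.IH[of "I - A"] Suc.prems by simp
  qed
  have "real (card (ccw I (Suc q) \<omega>)) = real (\<Sum>A\<in>SS. card (ccw (I - A) q \<omega>))"
    unfolding eq using inj fin Suc.prems
    by (subst card_image[OF inj], subst card_SigmaI) (auto intro: finite_ccw)
  also have "\<dots> = (\<Sum>A\<in>SS. fact (n - k) / (\<Prod>j<q. fact (\<omega> j)))"
    by (simp add: cA)
  also have "\<dots> = real (n choose k) * (fact (n - k) / (\<Prod>j<q. fact (\<omega> j)))"
    using Suc.prems by (simp add: SS_def n_subsets n_def)
  also have "\<dots> = fact n / (\<Prod>j<Suc q. fact (\<omega> j))"
    using kn by (simp add: binomial_fact k_def field_simps)
  finally show ?case by (simp add: n_def)
qed

lemma card_const_comp_words: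
  assumes "(\<Sum>j<q. \<omega> j) = r"
  shows "real (card (const_comp_words q r \<omega>)) = multinomial q r \<omega>"
  using card_ccw[where I="{..<r}" and q=q and \<omega>=\<omega>] assms by (simp add: const_comp_words_ccw multinomial_def)




primrec ofn :: "('a, 'b) ring_scheme \<Rightarrow> nat \<Rightarrow> 'a" where
  "ofn R 0 = \<zero>\<^bsub>R\<^esub>"
| "ofn R (Suc n) = ofn R n \<oplus>\<^bsub>R\<^esub> \<one>\<^bsub>R\<^esub>"

context cring
begin

lemma ofn_closed [simp, intro]: "ofn R n \<in> carrier R"
  by (induction n) auto

lemma ofn_add: "ofn R (m + n) = ofn R m \<oplus> ofn R n"
  by (induction n) (auto simp: a_ac)

lemma ofn_mult: "ofn R (m * n) = ofn R m \<otimes> ofn R n"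
  by (induction n) (auto simp: ofn_add r_distr a_comm)

lemma binomial_ring:
  assumes x: "x \<in> carrier R" and y: "y \<in> carrier R"
  shows "(x \<oplus> y) [^] n = (\<Oplus>k\<in>{..n}. ofn R (n choose k) \<otimes> (x [^] k \<otimes> y [^] (n - k)))"
proof (induction n)
  case 0
  then show ?case using x y by simp
next
  case (Suc n)
  define B where "B = (\<lambda>n k. ofn R (n choose k) \<otimes> (x [^] k \<otimes> y [^] (n - k)))"
  have Bc: "B m k \<in> carrier R" for m k using x y by (simp add: B_def)
  have IH: "(x \<oplus> y) [^] n = (\<Oplus>k\<in>{..n}. B n k)" using Suc by (simp add: B_def)
  have "(x \<oplus> y) [^] Suc n = (\<Oplus>k\<in>{..n}. B n k) \<otimes> x \<oplus> (\<Oplus>k\<in>{..n}. B n k) \<otimes> y"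
    using x y IH by (simp add: r_distr Bc)
  also have "(\<Oplus>k\<in>{..n}. B n k) \<otimes> x = (\<Oplus>k\<in>{..n}. ofn R (n choose k) \<otimes> (x [^] Suc k \<otimes> y [^] (n - k)))"
    using x y by (subst finsum_ldistr) (auto simp: Bc B_def m_ac intro!: finsum_cong)
  also have "(\<Oplus>k\<in>{..n}. B n k) \<otimes> y = (\<Oplus>k\<in>{..n}. ofn R (n choose k) \<otimes> (x [^] k \<otimes> y [^] (Suc n - k)))"
    using x y by (subst finsum_ldistr) (auto simp: Bc B_def m_ac Suc_diff_le intro!: finsum_cong)
  also have "\<dots> = (\<Oplus>k\<in>{..Suc n}. ofn R (n choose k) \<otimes> (x [^] k \<otimes> y [^] (Suc n - k)))"
    using x y by (subst finsum_Suc) (auto simp: binomial_eq_0)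
  also have "\<dots> = (\<Oplus>k\<in>{..n}. ofn R (n choose Suc k) \<otimes> (x [^] Suc k \<otimes> y [^] (n - k))) \<oplus> y [^] Suc n"
    using x y by (subst finsum_Suc2) auto
  finally have "(x \<oplus> y) [^] Suc n =
     (\<Oplus>k\<in>{..n}. ofn R (n choose k) \<otimes> (x [^] Suc k \<otimes> y [^] (n - k))) \<oplus>
     ((\<Oplus>k\<in>{..n}. ofn R (n choose Suc k) \<otimes> (x [^] Suc k \<otimes> y [^] (n - k))) \<oplus> y [^] Suc n)" .
  also have "\<dots> = (\<Oplus>k\<in>{..n}. ofn R (n choose k) \<otimes> (x [^] Suc k \<otimes> y [^] (n - k)) \<oplus>
                      ofn R (n choose Suc k) \<otimes> (x [^] Suc k \<otimes> y [^] (n - k))) \<oplus> y [^] Suc n"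
    using x y by (subst finsum_addf) (auto simp: a_assoc)
  also have "\<dots> = (\<Oplus>k\<in>{..n}. B (Suc n) (Suc k)) \<oplus> B (Suc n) 0"
    using x y by (auto simp: B_def l_distr ofn_add intro!: finsum_cong)
  also have "\<dots> = (\<Oplus>k\<in>{..Suc n}. B (Suc n) k)"
    using x y by (subst finsum_Suc2) (auto simp: Bc)
  finally show ?case by (simp add: B_def)
qed

lemma frobenius:
  assumes p: "prime p" and char: "ofn R p = \<zero>"
    and x: "x \<in> carrier R" and y: "y \<in> carrier R"
  shows "(x \<oplus> y) [^] p = x [^] p \<oplus> y [^] p"
proof -
  have p0: "p \<noteq> 0" using p by (auto simp: prime_gt_0_nat)
  have "(x \<oplus> y) [^] p = (\<Oplus>k\<in>{..p}. ofn R (p choose k) \<otimes> (x [^] k \<otimes> y [^] (p - k)))"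
    by (rule binomial_ring[OF x y])
  also have "\<dots> = (\<Oplus>k\<in>{0, p}. ofn R (p choose k) \<otimes> (x [^] k \<otimes> y [^] (p - k)))"
  proof (rule add.finprod_mono_neutral_cong_right)
    show "ofn R (p choose i) \<otimes> (x [^] i \<otimes> y [^] (p - i)) = \<zero>" if "i \<in> {..p} - {0, p}" for i
    proof -
      have "p dvd (p choose i)" using that p p0 by (intro dvd_choose_prime) auto
      then obtain m where "p choose i = p * m" by blast
      then show ?thesis using x y by (simp add: ofn_mult char)
    qed
  qed (use x y in auto)
  also have "\<dots> = x [^] p \<oplus> y [^] p"
    using x y p0 by (simp add: a_comm)
  finally show ?thesis .
qed

lemma frobenius_pow:
  assumes p: "prime p" and char: "ofn R p = \<zero>"
    and x: "x \<in> carrier R" and y: "y \<in> carrier R"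
  shows "(x \<oplus> y) [^] (p ^ k) = x [^] (p ^ k) \<oplus> y [^] (p ^ k)"
proof (induction k)
  case 0 then show ?case using x y by simp
next
  case (Suc k)
  have "(x \<oplus> y) [^] (p ^ Suc k) = ((x \<oplus> y) [^] (p ^ k)) [^] p"
    using x y by (simp add: nat_pow_pow mult.commute)
  also have "\<dots> = (x [^] (p ^ k)) [^] p \<oplus> (y [^] (p ^ k)) [^] p"
    using Suc x y by (simp add: frobenius[OF p char])
  also have "\<dots> = x [^] (p ^ Suc k) \<oplus> y [^] (p ^ Suc k)"
    using x y by (simp add: nat_pow_pow mult.commute)
  finally show ?case .
qed

lemma frobenius_finsum:
  assumes p: "prime p" and char: "ofn R p = \<zero>"
    and A: "finite A" and f: "f \<in> A \<rightarrow> carrier R"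
  shows "(\<Oplus>i\<in>A. f i) [^] (p ^ k) = (\<Oplus>i\<in>A. f i [^] (p ^ k))"
  using A f
proof (induction A rule: finite_induct)
  case empty
  have "p ^ k \<noteq> 0" using p by (simp add: prime_gt_0_nat)
  then show ?case by (simp add: nat_pow_zero)
next
  case (insert a A)
  then show ?case by (simp add: finsum_insert frobenius_pow[OF p char] finsum_closed Pi_def)
qed

lemma frobenius_minus:
  assumes p: "prime p" and char: "ofn R p = \<zero>"
    and x: "x \<in> carrier R" and y: "y \<in> carrier R"
  shows "(x \<ominus> y) [^] p = x [^] p \<ominus> y [^] p"
proof -
  have "((x \<ominus> y) \<oplus> y) [^] p = (x \<ominus> y) [^] p \<oplus> y [^] p"
    using x y by (intro frobenius[OF p char]) auto
  moreover have "(x \<ominus> y) \<oplus> y = x" using x y by algebra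
  ultimately have "x [^] p = (x \<ominus> y) [^] p \<oplus> y [^] p" by simp
  then show ?thesis using x y by (simp add: minus_eq a_assoc r_neg)
qed

lemma vand_helper:
  assumes "w \<in> carrier R" "E \<in> carrier R" "x \<in> carrier R" "P \<in> carrier R" "b \<in> carrier R"
  shows "w \<otimes> E \<otimes> ((x \<ominus> b) \<otimes> P) = w \<otimes> (E \<otimes> x) \<otimes> P \<oplus> (\<ominus> b) \<otimes> (w \<otimes> E \<otimes> P)"
  using assms unfolding minus_eq by algebra

lemma ofn_fermat:
  assumes p: "prime p" and char: "ofn R p = \<zero>"
  shows "ofn R n [^] p = ofn R n"
proof (induction n)
  case 0
  have "p \<noteq> 0" using p by (simp add: prime_gt_0_nat)
  then show ?case by (simp add: nat_pow_zero)
next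
  case (Suc n)
  then show ?case by (simp add: frobenius[OF p char])
qed

end

context domain
begin

lemma finprod_nonzero:
  assumes "finite B" "f \<in> B \<rightarrow> carrier R" "\<And>b. b \<in> B \<Longrightarrow> f b \<noteq> \<zero>"
  shows "finprod R f B \<noteq> \<zero>"
  using assms
proof (induction B rule: finite_induct)
  case empty then show ?case by simp
next
  case (insert a B)
  then show ?case by (simp add: finprod_insert integral_iff finprod_closed Pi_def)
qed

lemma finprod_zero_factor:
  assumes "finite B" "f \<in> B \<rightarrow> carrier R" "b \<in> B" "f b = \<zero>"
  shows "finprod R f B = \<zero>"
proof -
  have "B = insert b (B - {b})" using assms by auto
  then have "finprod R f B = f b \<otimes> finprod R f (B - {b})"
    using assms by (metis finprod_insert finite_Diff Diff_iff insertI1 Pi_split_insert_domain)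
  then show ?thesis using assms by (simp add: finprod_closed Pi_def)
qed

lemma vandermonde_aux:
  assumes I: "finite I" and e: "e ` I \<subseteq> carrier R" and w: "w \<in> I \<rightarrow> carrier R"
    and zero: "\<And>t. t < N \<Longrightarrow> (\<Oplus>i\<in>I. w i \<otimes> e i [^] t) = \<zero>"
    and B: "finite B" "B \<subseteq> carrier R"
  shows "card B + t < N \<Longrightarrow> (\<Oplus>i\<in>I. w i \<otimes> e i [^] t \<otimes> (\<Otimes>b\<in>B. e i \<ominus> b)) = \<zero>"
  using B
proof (induction B arbitrary: t rule: finite_induct)
  case empty
  have "(\<Oplus>i\<in>I. w i \<otimes> e i [^] t \<otimes> \<one>) = (\<Oplus>i\<in>I. w i \<otimes> e i [^] t)"
    by (intro finsum_cong') (use e w in \<open>auto simp: image_subset_iff Pi_def\<close>)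
  then show ?case using zero[of t] empty by simp
next
  case (insert b B)
  have ec: "e i \<in> carrier R" if "i \<in> I" for i using e that by auto
  have wc: "w i \<in> carrier R" if "i \<in> I" for i using w that by auto
  have bc: "b \<in> carrier R" using insert by auto
  have Bc: "B \<subseteq> carrier R" using insert by auto
  define P where "P i = (\<Otimes>b\<in>B. e i \<ominus> b)" for i
  have Pc: "P i \<in> carrier R" if "i \<in> I" for i
    unfolding P_def using ec[OF that] Bc by (intro finprod_closed) auto
  have h1: "(\<Oplus>i\<in>I. w i \<otimes> e i [^] Suc t \<otimes> P i) = \<zero>"
    using insert.IH[of "Suc t"] insert.prems insert.hyps Bc by (simp add: P_def)
  have h2: "(\<Oplus>i\<in>I. w i \<otimes> e i [^] t \<otimes> P i) = \<zero>"
    using insert.IH[of t] insert.prems insert.hyps Bc by (simp add: P_def)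
  have "(\<Oplus>i\<in>I. w i \<otimes> e i [^] t \<otimes> (\<Otimes>b\<in>insert b B. e i \<ominus> b))
      = (\<Oplus>i\<in>I. w i \<otimes> e i [^] Suc t \<otimes> P i \<oplus> (\<ominus> b) \<otimes> (w i \<otimes> e i [^] t \<otimes> P i))"
  proof (rule finsum_cong')
    fix i assume i: "i \<in> I"
    have eq: "(\<Otimes>b\<in>insert b B. e i \<ominus> b) = (e i \<ominus> b) \<otimes> P i"
      unfolding P_def using insert ec[OF i] bc Bc by (subst finprod_insert) auto
    show "w i \<otimes> e i [^] t \<otimes> (\<Otimes>b\<in>insert b B. e i \<ominus> b)
      = w i \<otimes> e i [^] Suc t \<otimes> P i \<oplus> (\<ominus> b) \<otimes> (w i \<otimes> e i [^] t \<otimes> P i)"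
      unfolding eq using ec[OF i] wc[OF i] Pc[OF i] bc by (simp add: vand_helper)
  qed (use ec wc Pc bc in auto)
  also have "\<dots> = (\<Oplus>i\<in>I. w i \<otimes> e i [^] Suc t \<otimes> P i) \<oplus> (\<Oplus>i\<in>I. (\<ominus> b) \<otimes> (w i \<otimes> e i [^] t \<otimes> P i))"
    using ec wc Pc bc by (intro finsum_addf) auto
  also have "(\<Oplus>i\<in>I. (\<ominus> b) \<otimes> (w i \<otimes> e i [^] t \<otimes> P i)) = (\<ominus> b) \<otimes> (\<Oplus>i\<in>I. w i \<otimes> e i [^] t \<otimes> P i)"
    using ec wc Pc bc I by (intro finsum_rdistr[symmetric]) auto
  finally show ?case using h1 h2 bc by simp
qed

lemma vandermonde:
  assumes I: "finite I" and inj: "inj_on e I" and e: "e ` I \<subseteq> carrier R"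
    and w: "w \<in> I \<rightarrow> carrier R" and N: "card I \<le> N"
    and zero: "\<And>t. t < N \<Longrightarrow> (\<Oplus>i\<in>I. w i \<otimes> e i [^] t) = \<zero>"
    and i0: "i0 \<in> I"
  shows "w i0 = \<zero>"
proof -
  have ec: "e i \<in> carrier R" if "i \<in> I" for i using e that by auto
  have wc: "w i \<in> carrier R" if "i \<in> I" for i using w that by auto
  define B where "B = e ` (I - {i0})"
  have Bc: "B \<subseteq> carrier R" "finite B" using e I by (auto simp: B_def)
  have cardB: "card B = card I - 1"
    unfolding B_def using inj I i0 by (subst card_image) (auto intro: inj_on_subset)
  have "card I \<ge> 1" using I i0 by (metis One_nat_def Suc_leI card_gt_0_iff empty_iff)
  then have "card B + 0 < N" using cardB N by simp
  from vandermonde_aux[OF I e w zero Bc(2) Bc(1) this]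
  have S: "(\<Oplus>i\<in>I. w i \<otimes> e i [^] (0::nat) \<otimes> (\<Otimes>b\<in>B. e i \<ominus> b)) = \<zero>" .
  define P where "P i = (\<Otimes>b\<in>B. e i \<ominus> b)" for i
  have Pc: "P i \<in> carrier R" if "i \<in> I" for i
    unfolding P_def using ec[OF that] Bc by (intro finprod_closed) auto
  have "(\<Oplus>i\<in>I. w i \<otimes> e i [^] (0::nat) \<otimes> P i) = (\<Oplus>i\<in>{i0}. w i \<otimes> e i [^] (0::nat) \<otimes> P i)"
  proof (rule add.finprod_mono_neutral_cong_right)
    show "w i \<otimes> e i [^] (0::nat) \<otimes> P i = \<zero>" if "i \<in> I - {i0}" for i
    proof -
      have "P i = \<zero>" unfolding P_def
        using that Bc ec by (intro finprod_zero_factor[of B _ "e i"]) (auto simp: B_def)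
      then show ?thesis using that wc ec by simp
    qed
  qed (use I i0 wc ec Pc in auto)
  then have "w i0 \<otimes> P i0 = \<zero>" using S i0 wc ec Pc by (simp add: P_def)
  moreover have "P i0 \<noteq> \<zero>" unfolding P_def
  proof (rule finprod_nonzero)
    show "b \<in> B \<Longrightarrow> e i0 \<ominus> b \<noteq> \<zero>" for b
      using inj i0 ec unfolding B_def by (auto simp: inj_on_def r_right_minus_eq)
  qed (use Bc ec i0 in auto)
  ultimately show ?thesis using wc[OF i0] Pc[OF i0] by (simp add: integral_iff)
qed

end



context domain
begin

lemma pr_set: "q \<in> carrier (poly_ring R) \<Longrightarrow> set q \<subseteq> carrier R"
  by (metis polynomial_incl univ_poly_carrier)

lemma pf_const: "c \<in> carrier R \<Longrightarrow> \<exists>q\<in>carrier (poly_ring R). \<forall>y\<in>carrier R. eval q y = c"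
proof (intro bexI ballI)
  fix y assume c: "c \<in> carrier R" and y: "y \<in> carrier R"
  show "eval (poly_of_const c) y = c"
    unfolding poly_of_const_def using c y by (subst eval_normalize) auto
next
  assume c: "c \<in> carrier R"
  show "poly_of_const c \<in> carrier (poly_ring R)"
    using canonical_embedding_is_hom[OF carrier_is_subring] c
    by (auto simp: ring_hom_def)
qed

lemma pf_var: "\<exists>q\<in>carrier (poly_ring R). \<forall>y\<in>carrier R. eval q y = y"
  using var_closed(1)[OF carrier_is_subring] eval_var by blast

lemma pf_add:
  assumes "\<exists>q\<in>carrier (poly_ring R). \<forall>y\<in>carrier R. eval q y = f y"
      and "\<exists>q\<in>carrier (poly_ring R). \<forall>y\<in>carrier R. eval q y = g y"
  shows "\<exists>q\<in>carrier (poly_ring R). \<forall>y\<in>carrier R. eval q y = f y \<oplus> g y"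
proof -
  interpret PR: ring "poly_ring R" by (rule univ_poly_is_ring[OF carrier_is_subring])
  obtain q1 q2 where q: "q1 \<in> carrier (poly_ring R)" "q2 \<in> carrier (poly_ring R)"
    "\<forall>y\<in>carrier R. eval q1 y = f y" "\<forall>y\<in>carrier R. eval q2 y = g y" using assms by blast
  show ?thesis
  proof (intro bexI ballI)
    show "q1 \<oplus>\<^bsub>poly_ring R\<^esub> q2 \<in> carrier (poly_ring R)" using q by simp
    fix y assume "y \<in> carrier R"
    then show "eval (q1 \<oplus>\<^bsub>poly_ring R\<^esub> q2) y = f y \<oplus> g y"
      using q pr_set by (simp add: univ_poly_add eval_poly_add del: poly_add.simps)
  qed
qed

lemma pf_mult:
  assumes "\<exists>q\<in>carrier (poly_ring R). \<forall>y\<in>carrier R. eval q y = f y"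
      and "\<exists>q\<in>carrier (poly_ring R). \<forall>y\<in>carrier R. eval q y = g y"
  shows "\<exists>q\<in>carrier (poly_ring R). \<forall>y\<in>carrier R. eval q y = f y \<otimes> g y"
proof -
  interpret PR: ring "poly_ring R" by (rule univ_poly_is_ring[OF carrier_is_subring])
  obtain q1 q2 where q: "q1 \<in> carrier (poly_ring R)" "q2 \<in> carrier (poly_ring R)"
    "\<forall>y\<in>carrier R. eval q1 y = f y" "\<forall>y\<in>carrier R. eval q2 y = g y" using assms by blast
  show ?thesis
  proof (intro bexI ballI)
    show "q1 \<otimes>\<^bsub>poly_ring R\<^esub> q2 \<in> carrier (poly_ring R)" using q by simp
    fix y assume "y \<in> carrier R"
    then show "eval (q1 \<otimes>\<^bsub>poly_ring R\<^esub> q2) y = f y \<otimes> g y"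
      using q pr_set by (simp add: univ_poly_mult eval_poly_mult)
  qed
qed

lemma pf_pow:
  fixes n :: nat
  assumes "a \<in> carrier R"
  shows "\<exists>q\<in>carrier (poly_ring R). \<forall>y\<in>carrier R. eval q y = (a \<oplus> y) [^] n"
proof (induction n)
  case 0
  then show ?case using pf_const[of \<one>] by simp
next
  case (Suc n)
  have "\<exists>q\<in>carrier (poly_ring R). \<forall>y\<in>carrier R. eval q y = a \<oplus> y"
    using pf_add[OF pf_const[OF assms] pf_var] .
  from pf_mult[OF Suc this] show ?case by simp
qed

lemma pf_shift:
  assumes "set g \<subseteq> carrier R" "a \<in> carrier R"
  shows "\<exists>q\<in>carrier (poly_ring R). \<forall>y\<in>carrier R. eval q y = eval g (a \<oplus> y)"
  using assms(1)
proof (induction g)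
  case Nil
  then show ?case using pf_const[of \<zero>] by simp
next
  case (Cons c g)
  have c: "c \<in> carrier R" using Cons by simp
  have "\<exists>q\<in>carrier (poly_ring R). \<forall>y\<in>carrier R. eval q y = c \<otimes> (a \<oplus> y) [^] length g \<oplus> eval g (a \<oplus> y)"
    by (rule pf_add[OF pf_mult[OF pf_const[OF c] pf_pow[OF assms(2)]]]) (use Cons in auto)
  then show ?case by simp
qed

lemma pf_root_bound:
  assumes "q \<in> carrier (poly_ring R)" "infinite {y \<in> carrier R. eval q y = \<zero>}"
  shows "q = []"
proof (rule ccontr)
  assume "q \<noteq> []"
  then have "{y \<in> carrier R. eval q y = \<zero>} \<subseteq> {x. is_root q x}" by (auto simp: is_root_def)
  then show False using finite_number_of_roots[OF assms(1)] assms(2) finite_subset by blast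
qed

lemma xpoly_eval:
  assumes "c \<in> carrier R" "x \<in> carrier R" "n \<ge> 2"
  shows "eval (\<one> # replicate (n - 2) \<zero> @ [\<ominus> \<one>, \<ominus> c]) x = x [^] n \<ominus> x \<ominus> c"
proof -
  obtain m where n: "n = Suc (Suc m)" using assms(3) by (metis add_2_eq_Suc le_Suc_ex)
  have "eval (\<one> # replicate (n - 2) \<zero> @ [\<ominus> \<one>, \<ominus> c]) x
        = \<one> \<otimes> x [^] n \<oplus> eval (replicate (n - 2) \<zero> @ [\<ominus> \<one>, \<ominus> c]) x"
    using assms by (simp add: n)
  also have "eval (replicate (n - 2) \<zero> @ [\<ominus> \<one>, \<ominus> c]) x = eval [\<ominus> \<one>, \<ominus> c] x"
    using assms by (intro eval_replicate) auto
  also have "eval [\<ominus> \<one>, \<ominus> c] x = \<ominus> x \<ominus> c" using assms by (simp add: minus_eq l_minus)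
  finally show ?thesis using assms by (simp add: minus_eq a_assoc)
qed

end



lemma size_le1_card:
  assumes "\<And>a. count M a \<le> 1"
  shows "size M = card (set_mset M)"
proof -
  have "M = mset_set (set_mset M)"
  proof (rule multiset_eqI)
    fix a show "count M a = count (mset_set (set_mset M)) a"
    proof -
      have "count M a = (if a \<in># M then 1 else 0)"
        using assms[of a] count_eq_zero_iff by force
      then show ?thesis by (simp add: count_mset_set)
    qed
  qed
  then show ?thesis by (metis size_mset_set)
qed

context algebraic_closure
begin

lemma xpoly_in:
  fixes n :: nat
  assumes "c \<in> K" "n \<ge> 2"
  shows "(\<one> # replicate (n - 2) \<zero> @ [\<ominus> \<one>, \<ominus> c]) \<in> carrier (K[X])"
proof -
  have sr: "subring K L" using subfieldE(1)[OF subfield_axioms] .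
  have "\<one> \<in> K" "\<zero> \<in> K" "\<ominus> \<one> \<in> K" "\<ominus> c \<in> K"
    using subringE[OF sr] assms by auto
  then show ?thesis unfolding sym[OF univ_poly_carrier] polynomial_def by auto
qed

lemma xpoly_root:
  fixes n :: nat
  assumes "c \<in> K" "n \<ge> 2"
  shows "\<exists>x\<in>carrier L. x [^] n \<ominus> x \<ominus> c = \<zero>"
proof -
  define P where "P = \<one> # replicate (n - 2) \<zero> @ [\<ominus> \<one>, \<ominus> c]"
  have sr: "subring K L" using subfieldE(1)[OF subfield_axioms] .
  have PK: "P \<in> carrier (K[X])" unfolding P_def by (rule xpoly_in[OF assms])
  have PR: "P \<in> carrier (poly_ring L)" using carrier_polynomial_shell[OF sr PK] .
  have "size (roots P) = degree P" using roots_over_subfield[OF PK] by (simp add: splitted_def)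
  also have "degree P = n" using assms by (simp add: P_def)
  finally have "roots P \<noteq> {#}" using assms by auto
  then obtain x where "x \<in># roots P" by blast
  then have "is_root P x" using roots_mem_iff_is_root[OF PR] by simp
  then have x: "x \<in> carrier L" "eval P x = \<zero>" by (auto simp: is_root_def)
  have cL: "c \<in> carrier L" using assms sr subringE(1) by blast
  show ?thesis using x xpoly_eval[OF cL x(1) assms(2)] by (auto simp: P_def)
qed

lemma infinite_carrier: "infinite (carrier L)"
proof
  assume fin: "finite (carrier L)"
  define n where "n = card (carrier L)"
  have "{\<zero>, \<one>} \<subseteq> carrier L" by simp
  then have "card {\<zero>, \<one>} \<le> n" unfolding n_def using fin by (rule card_mono[rotated])
  then have n2: "n \<ge> 2" by simp
  have pw: "x [^] n = x" if x: "x \<in> carrier L" for x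
  proof (cases "x = \<zero>")
    case True then show ?thesis using n2 by (simp add: nat_pow_zero)
  next
    case False
    interpret M: group "Multiplicative_Group.mult_of L" by (rule field_mult_group)
    have "x \<in> carrier (Multiplicative_Group.mult_of L)" using x False by simp
    then have "x [^]\<^bsub>Multiplicative_Group.mult_of L\<^esub> order (Multiplicative_Group.mult_of L) = \<one>\<^bsub>Multiplicative_Group.mult_of L\<^esub>" by (rule M.pow_order_eq_1)
    then have "x [^] (n - 1) = \<one>" using fin by (simp add: field.order_mult_of[OF field_axioms] order_def n_def Multiplicative_Group.nat_pow_mult_of)
    moreover obtain m where m: "n = Suc m" using n2 by (cases n) auto
    ultimately show ?thesis using x by simp
  qed
  have oK: "\<one> \<in> K" using subringE(3)[OF subfieldE(1)[OF subfield_axioms]] .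
  obtain x where x: "x \<in> carrier L" "x [^] n \<ominus> x \<ominus> \<one> = \<zero>" using xpoly_root[OF oK n2] by blast
  then have "x \<ominus> x \<ominus> \<one> = \<zero>" using pw[OF x(1)] by simp
  then have "\<ominus> \<one> = \<zero>" using x(1) by (simp add: minus_eq r_neg)
  then have "\<ominus> (\<ominus> \<one>) = \<ominus> \<zero>" by simp
  then show False by (simp add: minus_minus)
qed

lemma neg_one_nz: "\<ominus> \<one> \<noteq> \<zero>"
proof
  assume "\<ominus> \<one> = \<zero>"
  then have "\<ominus> (\<ominus> \<one>) = \<ominus> \<zero>" by simp
  then show False by (simp add: minus_minus)
qed

lemma helper_alg:
  assumes "y \<in> carrier L" "Y \<in> carrier L" "Q \<in> carrier L"
  shows "y \<otimes> (Y \<oplus> \<ominus> \<one> \<oplus> \<ominus> \<one> \<otimes> (y \<otimes> Q)) = Y \<otimes> y \<ominus> y \<ominus> \<one> \<otimes> y \<otimes> y \<otimes> Q"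
  using assms unfolding minus_eq by algebra

lemma helper_alg2:
  assumes "a \<in> carrier L" "Y \<in> carrier L" "y \<in> carrier L"
  shows "(a \<oplus> Y) \<ominus> (a \<oplus> y) = Y \<ominus> y"
  using assms unfolding minus_eq by algebra

lemma card_frob_roots:
  assumes p: "prime p" and char: "ofn L p = \<zero>" and r: "r = p ^ k" "k \<ge> 1"
  shows "card {x \<in> carrier L. x [^] r = x} = r"
proof -
  have r2: "r \<ge> 2"
  proof -
    have "p \<ge> 2" using p by (rule prime_ge_2_nat)
    moreover have "p \<le> p ^ k" using r(2) \<open>p \<ge> 2\<close> by (simp add: self_le_power)
    ultimately show ?thesis using r(1) by simp
  qed
  define P where "P = \<one> # replicate (r - 2) \<zero> @ [\<ominus> \<one>, \<ominus> \<zero>]"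
  have sr: "subring K L" using subfieldE(1)[OF subfield_axioms] .
  have zK: "\<zero> \<in> K" using subringE(2)[OF sr] .
  have PK: "P \<in> carrier (K[X])" unfolding P_def by (rule xpoly_in[OF zK r2])
  have PR: "P \<in> carrier (poly_ring L)" using carrier_polynomial_shell[OF sr PK] .
  have evP: "eval P x = x [^] r \<ominus> x" if "x \<in> carrier L" for x
    using xpoly_eval[OF zero_closed that r2] that by (simp add: P_def minus_eq)
  have size: "size (roots P) = r"
    using roots_over_subfield[OF PK] r2 by (simp add: splitted_def P_def)
  have mem: "x \<in># roots P \<longleftrightarrow> x \<in> carrier L \<and> x [^] r = x" for x
    using roots_mem_iff_is_root[OF PR, of x] evP[of x] by (auto simp: is_root_def P_def)
  have cnt: "count (roots P) a \<le> 1" for a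
  proof (rule ccontr)
    assume "\<not> count (roots P) a \<le> 1"
    then have c2: "2 \<le> alg_mult P a" using alg_mult_eq_count_roots[OF PR] by simp
    then have "a \<in># roots P" using alg_mult_eq_count_roots[OF PR] by (metis count_eq_zero_iff not_numeral_le_zero)
    then have a: "a \<in> carrier L" "a [^] r = a" using mem by auto
    interpret PRr: domain "poly_ring L" by (rule univ_poly_is_domain[OF carrier_is_subring])
    define lin where "lin = [\<one>, \<ominus> a]"
    have lin: "lin \<in> carrier (poly_ring L)"
      using a unfolding lin_def sym[OF univ_poly_carrier] polynomial_def by auto
    have "(lin [^]\<^bsub>poly_ring L\<^esub> (2::nat)) pdivides P"
      unfolding lin_def by (rule le_alg_mult_imp_pdivides[OF a(1) PR c2])
    then obtain g where g: "g \<in> carrier (poly_ring L)"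
        and Pg: "P = (lin [^]\<^bsub>poly_ring L\<^esub> (2::nat)) \<otimes>\<^bsub>poly_ring L\<^esub> g"
      unfolding pdivides_def factor_def by blast
    have evPy: "eval P y = (y \<ominus> a) [^] (2::nat) \<otimes> eval g y" if y: "y \<in> carrier L" for y
    proof -
      interpret E: ring_hom_ring "poly_ring L" L "\<lambda>p. eval p y"
        by (rule eval_ring_hom[OF carrier_is_subring y])
      have "eval P y = eval (lin [^]\<^bsub>poly_ring L\<^esub> (2::nat)) y \<otimes> eval g y"
        unfolding Pg using lin g by (simp add: E.hom_mult)
      also have "eval (lin [^]\<^bsub>poly_ring L\<^esub> (2::nat)) y = (eval lin y) [^] (2::nat)"
        using lin by (simp add: E.hom_nat_pow)
      also have "eval lin y = y \<ominus> a" using y a by (simp add: lin_def minus_eq)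
      finally show ?thesis .
    qed
    obtain q where q: "q \<in> carrier (poly_ring L)" "\<forall>y\<in>carrier L. eval q y = eval g (a \<oplus> y)"
      using pf_shift[OF pr_set[OF g] a(1)] by blast
    have qc: "eval q y \<in> carrier L" if "y \<in> carrier L" for y
      using eval_in_carrier[OF pr_set[OF q(1)] that] .
    have qpf: "\<exists>q'\<in>carrier (poly_ring L). \<forall>y\<in>carrier L. eval q' y = eval q y" using q(1) by blast
    obtain d where d: "d \<in> carrier (poly_ring L)"
      "\<forall>y\<in>carrier L. eval d y = (\<zero> \<oplus> y) [^] (r - 1) \<oplus> \<ominus> \<one> \<oplus> \<ominus> \<one> \<otimes> (y \<otimes> eval q y)"
      using pf_add[OF pf_add[OF pf_pow[OF zero_closed, of "r - 1"] pf_const[of "\<ominus> \<one>"]]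
                      pf_mult[OF pf_const[of "\<ominus> \<one>"] pf_mult[OF pf_var qpf]]] by auto
    have dz: "eval d y = \<zero>" if y: "y \<in> carrier L" "y \<noteq> \<zero>" for y
    proof -
      have ay: "a \<oplus> y \<in> carrier L" using a y by simp
      have "(a \<oplus> y) [^] r = a [^] r \<oplus> y [^] r"
        unfolding r(1) by (rule frobenius_pow[OF p char a(1) y(1)])
      then have "eval P (a \<oplus> y) = (a \<oplus> y[^] r) \<ominus> (a \<oplus> y)" using evP[OF ay] a by simp
      also have "\<dots> = y [^] r \<ominus> y" using a y by (simp add: helper_alg2)
      finally have e1: "eval P (a \<oplus> y) = y [^] r \<ominus> y" .
      have "eval P (a \<oplus> y) = ((a \<oplus> y) \<ominus> a) [^] (2::nat) \<otimes> eval g (a \<oplus> y)" by (rule evPy[OF ay])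
      also have "(a \<oplus> y) \<ominus> a = y" using a y unfolding minus_eq by algebra
      finally have e2: "y [^] r \<ominus> y = \<one> \<otimes> y \<otimes> y \<otimes> eval q y"
        using e1 q(2) y by (simp add: numeral_2_eq_2)
      have Yr: "y [^] (r - 1) \<otimes> y = y [^] r"
      proof -
        obtain m where "r = Suc m" using r2 by (cases r) auto
        then show ?thesis by simp
      qed
      have "y \<otimes> eval d y = y [^] (r - 1) \<otimes> y \<ominus> y \<ominus> \<one> \<otimes> y \<otimes> y \<otimes> eval q y"
        using d(2) y qc[OF y(1)] by (simp add: helper_alg)
      also have "\<dots> = \<zero>" using e2 Yr y qc[OF y(1)] by simp
      finally have "y \<otimes> eval d y = \<zero>" .
      then show ?thesis using y eval_in_carrier[OF pr_set[OF d(1)] y(1)] integral by blast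
    qed
    have "carrier L - {\<zero>} \<subseteq> {y \<in> carrier L. eval d y = \<zero>}" using dz by auto
    moreover have "infinite (carrier L - {\<zero>})" using infinite_carrier by simp
    ultimately have "infinite {y \<in> carrier L. eval d y = \<zero>}" using finite_subset by blast
    then have "d = []" by (rule pf_root_bound[OF d(1)])
    then have "eval d \<zero> = \<zero>" by simp
    moreover have "eval d \<zero> = \<ominus> \<one>"
      using d(2) r2 qc[of \<zero>] by (simp add: nat_pow_zero)
    ultimately show False using neg_one_nz by simp
  qed
  have "card {x \<in> carrier L. x [^] r = x} = card (set_mset (roots P))"
    using mem by (intro arg_cong[where f=card]) auto
  also have "\<dots> = size (roots P)" using size_le1_card[of "roots P"] cnt by simp
  finally show ?thesis using size by simp
qed

end



lemma ofn_residue: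
  assumes "prime p"
  shows "ofn (residue_ring (int p)) n = int n mod int p"
proof -
  interpret residues_prime p "residue_ring (int p)" using assms by unfold_locales auto
  show ?thesis
    by (induction n) (simp_all add: res_add_eq res_one_eq res_zero_eq mod_add_right_eq add.commute)
qed

lemma ofn_hom:
  assumes "ring_hom_ring A B h"
  shows "h (ofn A n) = ofn B n"
proof -
  interpret H: ring_hom_ring A B h by fact
  have c: "ofn A m \<in> carrier A" for m by (induction m) simp_all
  show ?thesis by (induction n) (simp_all add: H.hom_add c)
qed

lemma gf_exists:
  assumes p: "prime p" and k: "k \<ge> 1"
  shows "\<exists>(L::((int list \<times> nat) multiset \<Rightarrow> int) ring) S. field L \<and> S \<subseteq> carrier L \<and> finite S \<and>
           card S = p ^ k \<and> (\<forall>a\<in>S. \<forall>b\<in>S. a \<oplus>\<^bsub>L\<^esub> b \<in> S \<and> a \<otimes>\<^bsub>L\<^esub> b \<in> S) \<and>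
           ofn L p = \<zero>\<^bsub>L\<^esub> \<and> (\<forall>n. ofn L n \<in> S) \<and>
           (\<forall>i<p. \<forall>j<p. ofn L i = ofn L j \<longrightarrow> i = j)"
proof -
  interpret KK: residues_prime p "residue_ring (int p)" using p by unfold_locales auto
  have fK: "field (residue_ring (int p))" by (rule KK.is_field)
  define L where "L = field.alg_closure (residue_ring (int p))"
  have AC: "algebraic_closure L (ring.indexed_const (residue_ring (int p)) ` carrier (residue_ring (int p)))"
    unfolding L_def by (rule field.alg_closureE(1)[OF fK])
  have hom: "ring.indexed_const (residue_ring (int p)) \<in> ring_hom (residue_ring (int p)) L"
    unfolding L_def by (rule field.alg_closureE(2)[OF fK])
  interpret LL: algebraic_closure L "ring.indexed_const (residue_ring (int p)) ` carrier (residue_ring (int p))" by (rule AC)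
  have fL: "field L" by (rule LL.field_axioms)
  have HR: "ring_hom_ring (residue_ring (int p)) L (ring.indexed_const (residue_ring (int p)))"
    by (rule ring_hom_ringI2[OF KK.ring_axioms LL.ring_axioms hom])
  have ofnL: "ofn L n = ring.indexed_const (residue_ring (int p)) (int n mod int p)" for n
    using ofn_hom[OF HR, of n] ofn_residue[OF p, of n] by simp
  have char: "ofn L p = \<zero>\<^bsub>L\<^esub>"
  proof -
    have "ofn L p = ring.indexed_const (residue_ring (int p)) \<zero>\<^bsub>(residue_ring (int p))\<^esub>" using ofnL[of p] by (simp add: KK.res_zero_eq)
    then show ?thesis using ring_hom_zero[OF hom KK.ring_axioms LL.ring_axioms] by simp
  qed
  have inj: "x = y" if xy: "x \<in> carrier (residue_ring (int p))" "y \<in> carrier (residue_ring (int p))"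
      "(ring.indexed_const (residue_ring (int p)) x :: (int list \<times> nat) multiset \<Rightarrow> int) = ring.indexed_const (residue_ring (int p)) y" for x y
  proof (rule ccontr)
    assume ne: "x \<noteq> y"
    interpret H: ring_hom_ring "residue_ring (int p)" L "ring.indexed_const (residue_ring (int p))" by (rule HR)
    define u where "u = x \<ominus>\<^bsub>residue_ring (int p)\<^esub> y"
    have uc: "u \<in> carrier (residue_ring (int p))" using xy by (simp add: u_def)
    have u0: "u \<noteq> \<zero>\<^bsub>residue_ring (int p)\<^esub>" using ne xy by (simp add: u_def KK.r_right_minus_eq)
    have "u \<in> Units (residue_ring (int p))" using uc u0 KK.field_Units by simp
    then obtain v where v: "v \<in> carrier (residue_ring (int p))" "u \<otimes>\<^bsub>residue_ring (int p)\<^esub> v = \<one>\<^bsub>residue_ring (int p)\<^esub>"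
      unfolding Units_def by blast
    have "ring.indexed_const (residue_ring (int p)) u = \<zero>\<^bsub>L\<^esub>"
      using xy by (simp add: u_def KK.minus_eq LL.r_neg H.hom_closed)
    then have "\<zero>\<^bsub>L\<^esub> \<otimes>\<^bsub>L\<^esub> ring.indexed_const (residue_ring (int p)) v = \<one>\<^bsub>L\<^esub>"
      using H.hom_mult[OF uc v(1)] v(2) by simp
    then show False using v(1) LL.one_not_zero by simp
  qed
  have injo: "\<forall>i<p. \<forall>j<p. ofn L i = ofn L j \<longrightarrow> i = j"
  proof (intro allI impI)
    fix i j assume ij: "i < p" "j < p" "ofn L i = ofn L j"
    have "int i mod int p \<in> carrier (residue_ring (int p))" "int j mod int p \<in> carrier (residue_ring (int p))"
      using ij p by (auto simp: KK.res_carrier_eq prime_gt_0_nat)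
    then have "int i mod int p = int j mod int p" using inj ij(3) ofnL by metis
    then show "i = j" using ij by simp
  qed
  define r where "r = p ^ k"
  define S where "S = {x \<in> carrier L. x [^]\<^bsub>L\<^esub> r = x}"
  have cS: "card S = r" unfolding S_def by (rule LL.card_frob_roots[OF p char r_def k])
  have r0: "r > 0" using p by (simp add: r_def prime_gt_0_nat)
  have finS: "finite S" using cS r0 by (metis card_gt_0_iff)
  have clos: "\<forall>a\<in>S. \<forall>b\<in>S. a \<oplus>\<^bsub>L\<^esub> b \<in> S \<and> a \<otimes>\<^bsub>L\<^esub> b \<in> S"
    unfolding S_def r_def
    by (auto simp: LL.frobenius_pow[OF p char] LL.nat_pow_distrib)
  have fermat_k: "ofn L n [^]\<^bsub>L\<^esub> (p ^ m) = ofn L n" for n m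
  proof (induction m)
    case 0 then show ?case by simp
  next
    case (Suc m)
    have "ofn L n [^]\<^bsub>L\<^esub> (p ^ Suc m) = (ofn L n [^]\<^bsub>L\<^esub> (p ^ m)) [^]\<^bsub>L\<^esub> p"
      by (simp add: LL.nat_pow_pow mult.commute)
    then show ?case using Suc LL.ofn_fermat[OF p char] by simp
  qed
  have ofnS: "\<forall>n. ofn L n \<in> S" unfolding S_def r_def using fermat_k by (simp add: LL.ofn_closed)
  show ?thesis
    by (rule exI[of _ L], rule exI[of _ S]) (use fL finS cS clos char ofnS injo in \<open>auto simp: S_def r_def\<close>)
qed




context cring
begin

lemma ofn_sum: "finite A \<Longrightarrow> ofn R (sum g A) = (\<Oplus>i\<in>A. ofn R (g i))"
  by (induction A rule: finite_induct) (simp_all add: ofn_add finsum_insert)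

lemma finsum_in_subset:
  assumes "finite A" "\<And>i. i \<in> A \<Longrightarrow> g i \<in> S" "S \<subseteq> carrier R" "\<zero> \<in> S"
    "\<And>a b. a \<in> S \<Longrightarrow> b \<in> S \<Longrightarrow> a \<oplus> b \<in> S"
  shows "(\<Oplus>i\<in>A. g i) \<in> S"
  using assms(1,2)
proof (induction A rule: finite_induct)
  case empty then show ?case using assms by simp
next
  case (insert a A)
  have "g \<in> A \<rightarrow> carrier R" "g a \<in> carrier R" using insert assms(3) by auto
  then show ?case using insert assms(3,5) by (simp add: finsum_insert)
qed

lemma pow_in_subset:
  assumes "a \<in> S" "\<one> \<in> S" "\<And>a b. a \<in> S \<Longrightarrow> b \<in> S \<Longrightarrow> a \<otimes> b \<in> S"
  shows "a [^] (n::nat) \<in> S"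
  by (induction n) (use assms in auto)

lemma finsum_diff_zero:
  assumes "finite A" "f \<in> A \<rightarrow> carrier R" "g \<in> A \<rightarrow> carrier R"
    "(\<Oplus>i\<in>A. f i) = (\<Oplus>i\<in>A. g i)"
  shows "(\<Oplus>i\<in>A. f i \<ominus> g i) = \<zero>"
proof -
  have "(\<Oplus>i\<in>A. f i \<ominus> g i) = (\<Oplus>i\<in>A. f i \<oplus> (\<ominus> \<one>) \<otimes> g i)"
    using assms by (intro finsum_cong') (auto simp: minus_eq l_minus Pi_iff)
  also have "\<dots> = (\<Oplus>i\<in>A. f i) \<oplus> (\<Oplus>i\<in>A. (\<ominus> \<one>) \<otimes> g i)"
    using assms by (intro finsum_addf) auto
  also have "(\<Oplus>i\<in>A. (\<ominus> \<one>) \<otimes> g i) = (\<ominus> \<one>) \<otimes> (\<Oplus>i\<in>A. g i)"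
    using assms by (intro finsum_rdistr[symmetric]) auto
  finally show ?thesis using assms by (simp add: l_minus r_neg)
qed

end


theorem theorem1:
  fixes q p r d0 :: nat and \<omega> :: "nat \<Rightarrow> nat"
  assumes "q \<ge> 3"
    and "prime p" and "p \<ge> q"
    and "\<exists>k. r = p ^ k"
    and "(\<Sum>j<q. \<omega> j) = r"
    and "1 \<le> d0" and "d0 + 2 \<le> r"
  shows "\<exists>C. C \<subseteq> const_comp_words q r \<omega>
           \<and> min_dist_at_least r C (mu p d0 + 2)
           \<and> real (card C) \<ge> multinomial q r \<omega> / real r ^ (d0 - 1)"
proof -
  note q3 = assms(1) and p = assms(2) and pq = assms(3) and sumw = assms(5) and d0 = assms(6,7)
  obtain k where rk: "r = p ^ k" using assms(4) by blast
  have k1: "k \<ge> 1" using rk d0 by (cases k) auto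
  obtain L :: "((int list \<times> nat) multiset \<Rightarrow> int) ring" and S where
    fL: "field L" and SL: "S \<subseteq> carrier L" and finS: "finite S" and cS: "card S = p ^ k"
    and clos: "\<forall>a\<in>S. \<forall>b\<in>S. a \<oplus>\<^bsub>L\<^esub> b \<in> S \<and> a \<otimes>\<^bsub>L\<^esub> b \<in> S"
    and char: "ofn L p = \<zero>\<^bsub>L\<^esub>" and ofnS: "\<forall>n. ofn L n \<in> S"
    and injo: "\<forall>i<p. \<forall>j<p. ofn L i = ofn L j \<longrightarrow> i = j"
    using gf_exists[OF p k1] by blast
  interpret LF: field L by (rule fL)
  have cSr: "card S = r" using cS rk by simp
  obtain e where e: "bij_betw e {0..<r} S" using ex_bij_betw_nat_finite[OF finS] cSr by blast
  have eS: "e i \<in> S" if "i < r" for i using e that by (auto simp: bij_betw_def)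
  have eL: "e i \<in> carrier L" if "i < r" for i using eS[OF that] SL by auto
  have einj: "inj_on e {..<r}" using e by (simp add: bij_betw_def atLeast0LessThan)
  have zS: "\<zero>\<^bsub>L\<^esub> \<in> S" using ofnS by (metis ofn.simps(1))
  have oS: "\<one>\<^bsub>L\<^esub> \<in> S" using ofnS LF.l_zero by (metis LF.one_closed ofn.simps(1,2))
  define syn where "syn x t = (\<Oplus>\<^bsub>L\<^esub>i\<in>{..<r}. ofn L (x i) \<otimes>\<^bsub>L\<^esub> e i [^]\<^bsub>L\<^esub> (t::nat))" for x t
  have synS: "syn x t \<in> S" for x t
    unfolding syn_def
  proof (rule LF.finsum_in_subset[OF _ _ SL zS])
    fix i assume "i \<in> {..<r}"
    then have "e i [^]\<^bsub>L\<^esub> t \<in> S" using eS clos oS by (intro LF.pow_in_subset) auto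
    then show "ofn L (x i) \<otimes>\<^bsub>L\<^esub> e i [^]\<^bsub>L\<^esub> t \<in> S" using clos ofnS by auto
  qed (use clos in auto)
  define W where "W = const_comp_words q r \<omega>"
  define Y where "Y = (\<Pi>\<^sub>E t\<in>{1..<d0}. S)"
  define f where "f x = (\<lambda>t\<in>{1..<d0}. syn x t)" for x
  have finW: "finite W" unfolding W_def const_comp_words_ccw by (rule finite_ccw) simp
  have fW: "f ` W \<subseteq> Y" unfolding Y_def f_def using synS by auto
  have finY: "finite Y" unfolding Y_def using finS by (intro finite_PiE) auto
  have cY: "card Y = r ^ (d0 - 1)" unfolding Y_def using finS by (simp add: card_PiE cSr)
  have Yne: "Y \<noteq> {}" unfolding Y_def using zS by (auto simp: PiE_eq_empty_iff)
  obtain y where yY: "y \<in> Y" and big: "card W \<le> card Y * card {x\<in>W. f x = y}"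
    using pigeonhole_fiber[OF finW fW finY Yne] by blast
  define C where "C = {x\<in>W. f x = y}"
  have r0: "r > 0" using d0 by simp
  have cardW: "real (card W) = multinomial q r \<omega>"
    unfolding W_def by (rule card_const_comp_words[OF sumw])
  have bound: "real (card C) \<ge> multinomial q r \<omega> / real r ^ (d0 - 1)"
  proof -
    have h: "card W \<le> r ^ (d0 - 1) * card C" using big cY by (simp add: C_def)
    have "real (card W) \<le> real (r ^ (d0 - 1) * card C)" using h by (simp only: of_nat_le_iff)
    then have "real (card W) \<le> real r ^ (d0 - 1) * real (card C)" by simp
    moreover have "real r ^ (d0 - 1) > 0" using r0 by simp
    ultimately show ?thesis using cardW by (simp add: field_simps)
  qed
  have dist: "min_dist_at_least r C (mu p d0 + 2)"
    unfolding min_dist_at_least_def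
  proof (intro ballI impI)
    fix x x' assume x: "x \<in> C" and x': "x' \<in> C" and ne: "x \<noteq> x'"
    have xW: "x \<in> ccw {..<r} q \<omega>" "x' \<in> ccw {..<r} q \<omega>"
      using x x' by (auto simp: C_def W_def const_comp_words_ccw)
    have xq: "x i < q" "x' i < q" if "i < r" for i
      using xW that by (auto simp: ccw_def PiE_def Pi_def)
    define T where "T = {i \<in> {..<r}. x i \<noteq> x' i}"
    have hd: "hamming_dist r x x' = card T" by (simp add: hamming_dist_def T_def)
    define z where "z i = ofn L (x i) \<ominus>\<^bsub>L\<^esub> ofn L (x' i)" for i
    have zc: "z i \<in> carrier L" for i by (simp add: z_def)
    have zT: "z i \<noteq> \<zero>\<^bsub>L\<^esub>" if "i \<in> T" for i
    proof
      assume "z i = \<zero>\<^bsub>L\<^esub>"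
      then have "ofn L (x i) = ofn L (x' i)" by (simp add: z_def LF.r_right_minus_eq)
      moreover have ir: "i < r" using that by (simp add: T_def)
      moreover have "x i < p" "x' i < p" using xq[OF ir] pq by auto
      ultimately have "x i = x' i" using injo by blast
      then show False using that by (simp add: T_def)
    qed
    have zn: "z i = \<zero>\<^bsub>L\<^esub>" if "i \<notin> T" "i < r" for i using that by (simp add: z_def T_def)
    have fx: "f x = f x'" using x x' by (simp add: C_def)
    define N where "N = (if p dvd d0 then d0 + 1 else d0)"
    have sumT: "(\<Oplus>\<^bsub>L\<^esub>i\<in>{..<r}. z i \<otimes>\<^bsub>L\<^esub> e i [^]\<^bsub>L\<^esub> t) = (\<Oplus>\<^bsub>L\<^esub>i\<in>T. z i \<otimes>\<^bsub>L\<^esub> e i [^]\<^bsub>L\<^esub> t)" for t :: nat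
      by (rule LF.add.finprod_mono_neutral_cong_right) (use eL zn zc in \<open>auto simp: T_def\<close>)
    have synz: "syn x t = syn x' t \<Longrightarrow> (\<Oplus>\<^bsub>L\<^esub>i\<in>{..<r}. z i \<otimes>\<^bsub>L\<^esub> e i [^]\<^bsub>L\<^esub> t) = \<zero>\<^bsub>L\<^esub>" for t :: nat
    proof -
      assume "syn x t = syn x' t"
      then have "(\<Oplus>\<^bsub>L\<^esub>i\<in>{..<r}. ofn L (x i) \<otimes>\<^bsub>L\<^esub> e i [^]\<^bsub>L\<^esub> t \<ominus>\<^bsub>L\<^esub> ofn L (x' i) \<otimes>\<^bsub>L\<^esub> e i [^]\<^bsub>L\<^esub> t) = \<zero>\<^bsub>L\<^esub>"
        unfolding syn_def by (intro LF.finsum_diff_zero) (use eL in auto)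
      moreover have "(\<Oplus>\<^bsub>L\<^esub>i\<in>{..<r}. ofn L (x i) \<otimes>\<^bsub>L\<^esub> e i [^]\<^bsub>L\<^esub> t \<ominus>\<^bsub>L\<^esub> ofn L (x' i) \<otimes>\<^bsub>L\<^esub> e i [^]\<^bsub>L\<^esub> t)
          = (\<Oplus>\<^bsub>L\<^esub>i\<in>{..<r}. z i \<otimes>\<^bsub>L\<^esub> e i [^]\<^bsub>L\<^esub> t)"
        by (intro LF.finsum_cong') (use eL in \<open>auto simp: z_def LF.minus_eq LF.l_distr LF.l_minus\<close>)
      ultimately show ?thesis by simp
    qed
    have vanish: "(\<Oplus>\<^bsub>L\<^esub>i\<in>T. z i \<otimes>\<^bsub>L\<^esub> e i [^]\<^bsub>L\<^esub> t) = \<zero>\<^bsub>L\<^esub>" if "t < d0" for t :: nat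
    proof (cases "t = 0")
      case True
      have s0: "syn w 0 = ofn L (\<Sum>i<r. w i)" for w
      proof -
        have "syn w 0 = (\<Oplus>\<^bsub>L\<^esub>i\<in>{..<r}. ofn L (w i))"
          unfolding syn_def by (intro LF.finsum_cong') (use eL in auto)
        also have "\<dots> = ofn L (\<Sum>i<r. w i)" by (rule LF.ofn_sum[symmetric]) simp
        finally show ?thesis .
      qed
      have "(\<Sum>i<r. x i) = (\<Sum>i<r. x' i)" using ccw_sum[OF _ xW(1)] ccw_sum[OF _ xW(2)] by simp
      then have "syn x 0 = syn x' 0" using s0[of x] s0[of x'] by simp
      then have A: "(\<Oplus>\<^bsub>L\<^esub>i\<in>{..<r}. z i \<otimes>\<^bsub>L\<^esub> e i [^]\<^bsub>L\<^esub> (0::nat)) = \<zero>\<^bsub>L\<^esub>" by (rule synz)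
      have "(\<Oplus>\<^bsub>L\<^esub>i\<in>T. z i \<otimes>\<^bsub>L\<^esub> e i [^]\<^bsub>L\<^esub> (0::nat)) = \<zero>\<^bsub>L\<^esub>" using A sumT[of 0] by metis
      then show ?thesis using True by (simp only:)
    next
      case False
      then have "t \<in> {1..<d0}" using that by simp
      then have "syn x t = syn x' t" using fun_cong[OF fx, of t] by (simp add: f_def)
      then have "(\<Oplus>\<^bsub>L\<^esub>i\<in>{..<r}. z i \<otimes>\<^bsub>L\<^esub> e i [^]\<^bsub>L\<^esub> t) = \<zero>\<^bsub>L\<^esub>" by (rule synz)
      then show ?thesis using sumT[of t] by metis
    qed
    have vanishN: "(\<Oplus>\<^bsub>L\<^esub>i\<in>T. z i \<otimes>\<^bsub>L\<^esub> e i [^]\<^bsub>L\<^esub> t) = \<zero>\<^bsub>L\<^esub>" if "t < N" for t :: nat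
    proof (cases "t < d0")
      case True then show ?thesis by (rule vanish)
    next
      case False
      then have pd: "p dvd d0" and td: "t = d0" using that by (auto simp: N_def split: if_splits)
      obtain m where m: "d0 = p * m" using pd by blast
      have p2: "p \<ge> 2" using p by (rule prime_ge_2_nat)
      have m0: "m > 0" using m d0 by (cases m) auto
      have "1 * m < p * m" by (rule mult_strict_right_mono) (use p2 m0 in auto)
      then have "m < d0" using m by simp
      then have S0: "(\<Oplus>\<^bsub>L\<^esub>i\<in>T. z i \<otimes>\<^bsub>L\<^esub> e i [^]\<^bsub>L\<^esub> m) = \<zero>\<^bsub>L\<^esub>" by (rule vanish)
      have finT: "finite T" by (simp add: T_def)
      have TL: "(\<lambda>i. z i \<otimes>\<^bsub>L\<^esub> e i [^]\<^bsub>L\<^esub> m) \<in> T \<rightarrow> carrier L" using eL zc by (auto simp: T_def)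
      have "(\<Oplus>\<^bsub>L\<^esub>i\<in>T. z i \<otimes>\<^bsub>L\<^esub> e i [^]\<^bsub>L\<^esub> m) [^]\<^bsub>L\<^esub> (p ^ 1)
           = (\<Oplus>\<^bsub>L\<^esub>i\<in>T. (z i \<otimes>\<^bsub>L\<^esub> e i [^]\<^bsub>L\<^esub> m) [^]\<^bsub>L\<^esub> (p ^ 1))"
        by (rule LF.frobenius_finsum[OF p char finT TL])
      also have "\<dots> = (\<Oplus>\<^bsub>L\<^esub>i\<in>T. z i \<otimes>\<^bsub>L\<^esub> e i [^]\<^bsub>L\<^esub> t)"
      proof (intro LF.finsum_cong')
        fix i assume i: "i \<in> T"
        have ei: "e i \<in> carrier L" using i eL by (auto simp: T_def)
        have "z i [^]\<^bsub>L\<^esub> p = z i"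
          unfolding z_def by (simp add: LF.frobenius_minus[OF p char] LF.ofn_fermat[OF p char])
        then show "(z i \<otimes>\<^bsub>L\<^esub> e i [^]\<^bsub>L\<^esub> m) [^]\<^bsub>L\<^esub> (p ^ 1) = z i \<otimes>\<^bsub>L\<^esub> e i [^]\<^bsub>L\<^esub> t"
          using ei zc[of i] by (simp add: LF.nat_pow_distrib LF.nat_pow_pow td m mult.commute)
      qed (use eL zc in \<open>auto simp: T_def\<close>)
      finally show ?thesis using S0 p2 by (simp add: LF.nat_pow_zero)
    qed
    have Tne: "T \<noteq> {}"
    proof
      assume "T = {}"
      then have "\<forall>i<r. x i = x' i" by (auto simp: T_def)
      then have "x = x'"
      proof (intro ext)
        fix i assume all: "\<forall>i<r. x i = x' i"
        show "x i = x' i"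
        proof (cases "i < r")
          case True then show ?thesis using all by simp
        next
          case False then show ?thesis using xW by (auto simp: ccw_def PiE_def extensional_def)
        qed
      qed
      then show False using ne by simp
    qed
    then obtain i0 where i0: "i0 \<in> T" by blast
    have "\<not> card T \<le> N"
    proof
      assume cT: "card T \<le> N"
      have "z i0 = \<zero>\<^bsub>L\<^esub>"
        by (rule LF.vandermonde[OF _ _ _ _ cT vanishN i0])
           (use einj eL zc in \<open>auto simp: T_def intro: inj_on_subset\<close>)
      then show False using zT[OF i0] by simp
    qed
    then have "card T \<ge> N + 1" by simp
    then show "mu p d0 + 2 \<le> hamming_dist r x x'"
      using hd d0 by (auto simp: N_def mu_def split: if_splits)
  qed
  have "C \<subseteq> const_comp_words q r \<omega>" by (auto simp: C_def W_def)
  then show ?thesis using dist bound by blast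
qed


end
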